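(* Let $\mathcal K$ be an abstract Krivine structure and let $\mathcal A_{\mathcal K\bullet}=(\mathcal P_\bullet(\Pi),\circ_\bullet,\to_\bullet,\supseteq,\mathsf k_\bullet,\mathsf s_\bullet,\Phi)$ as defined below. On $\mathcal P_\bullet(\Pi)$ consider the relation $\sqsubseteq_\bullet$: $Q\sqsubseteq_\bullet R$ iff there is $t\in\mathrm{QP}$ with $t\perp Q\to_\bullet R$; and the relation $\sqsubseteq_{\mathcal A}$: $Q\sqsubseteq_{\mathcal A}R$ iff there is $F\in\Phi$ with $F\circ_\bullet Q\supseteq R$. Then these two relations coincide, so $\mathcal H_{\mathcal K\bullet}=(\mathcal P_\bullet(\Pi),\sqsubseteq_\bullet)$ and the preorder $\mathcal H_{\mathcal A_{\mathcal K\bullet}}=(\mathcal P_\bullet(\Pi),\sqsubseteq_{\mathcal A})$ are isomorphic; in particular $\mathcal H_{\mathcal K\bullet}$ is a Heyting preorder.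
   Context: An abstract Krivine structure $\mathcal K$ consists of sets $\Lambda,\Pi$, a relation $\perp\subseteq\Lambda\times\Pi$ ($t\perp P$ means $t\perp\pi$ for all $\pi\in P$), a map $\mathrm{push}$ written $t\cdot\pi$ (associating to the right), an application $ts$ on $\Lambda$ (associating to the left), a subset $\mathrm{QP}\subseteq\Lambda$ closed under application, and $\mathsf K,\mathsf S\in\mathrm{QP}$ with: $t\perp s\cdot\pi\Rightarrow ts\perp\pi$; $t\perp\pi\Rightarrow\mathsf K\perp t\cdot s\cdot\pi$; $tu(su)\perp\pi\Rightarrow\mathsf S\perp t\cdot s\cdot u\cdot\pi$. Polars: $L^\perp=\{\pi:\forall t\in L,\ t\perp\pi\}$, ${}^\perp P=\{t:\forall\pi\in P,\ t\perp\pi\}$; $\overline P=({}^\perp P)^\perp$; $\widehat P=\bigcup_{\pi\in P}\overline{\{\pi\}}$; $\mathcal P_\bullet(\Pi)=\{P:\widehat P=P\}$. For $P,Q\subseteq\Pi$: $P\to_\bullet Q=\widehat{\{t\cdot\pi:t\in{}^\perp P,\pi\in Q\}}$, $P\circ_\bullet Q=\{\pi: t\cdot\pi'\in P\ \forall t\in{}^\perp Q,\ \pi'\in\overline{\{\pi\}}\}$. $\mathsf E=\mathsf S(\mathsf K(\mathsf S\mathsf K\mathsf K))$, $\mathsf B=\mathsf S(\mathsf K\mathsf S)\mathsf K$, $\mathsf k_\bullet=\{\mathsf E\mathsf K\}^\perp$, $\mathsf s_\bullet=\{\mathsf E((\mathsf B\mathsf E)\mathsf S)\}^\perp$, $\Phi=\{P\in\mathcal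 P_\bullet(\Pi):\exists t\in\mathrm{QP},\ t\perp P\}$. $\mathcal A_{\mathcal K\bullet}$ is a full adjunction implicative ordered combinatory algebra with order $P\le Q\iff P\supseteq Q$, and its associated Heyting preorder has underlying preorder $\sqsubseteq_{\mathcal A}$, meet $a\wedge b=\mathsf p\circ_\bullet a\circ_\bullet b$ (with $\mathsf p$ the pairing combinator $\lambda^*x\lambda^*y\lambda^*z.zxy$ built from $\mathsf k_\bullet,\mathsf s_\bullet$) and implication $\to_\bullet$. A Heyting preorder is a preorder with finite meets ($\wedge$, top $\top$) and a binary operation $\to$ with $a\wedge b\le c\iff a\le b\to c$. *)

theory Defs
  imports Main
begin

record ('l, 'p) aks =
  perp :: "'l \<Rightarrow> 'p \<Rightarrow> bool"
  push :: "'l \<Rightarrow> 'p \<Rightarrow> 'p"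
  app  :: "'l \<Rightarrow> 'l \<Rightarrow> 'l"
  QP   :: "'l set"
  Kc   :: 'l
  Sc   :: 'l

definition is_aks :: "('l, 'p) aks \<Rightarrow> bool" where
  "is_aks K \<longleftrightarrow>
     (\<forall>t\<in>QP K. \<forall>s\<in>QP K. app K t s \<in> QP K) \<and>
     Kc K \<in> QP K \<and> Sc K \<in> QP K \<and>
     (\<forall>t s \<pi>. perp K t (push K s \<pi>) \<longrightarrow> perp K (app K t s) \<pi>) \<and>
     (\<forall>t s \<pi>. perp K t \<pi> \<longrightarrow> perp K (Kc K) (push K t (push K s \<pi>))) \<and>
     (\<forall>t s u \<pi>. perp K (app K (app K t u) (app K s u)) \<pi> \<longrightarrow>
                perp K (Sc K) (push K t (push K s (push K u \<pi>))))"

definition lpol :: "('l, 'p) aks \<Rightarrow> 'l set \<Rightarrow> 'p set" where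
  "lpol K L = {\<pi>. \<forall>t\<in>L. perp K t \<pi>}"

definition rpol :: "('l, 'p) aks \<Rightarrow> 'p set \<Rightarrow> 'l set" where
  "rpol K P = {t. \<forall>\<pi>\<in>P. perp K t \<pi>}"

definition pcl :: "('l, 'p) aks \<Rightarrow> 'p set \<Rightarrow> 'p set" where
  "pcl K P = lpol K (rpol K P)"

definition phat :: "('l, 'p) aks \<Rightarrow> 'p set \<Rightarrow> 'p set" where
  "phat K P = (\<Union>\<pi>\<in>P. pcl K {\<pi>})"

definition Pbul :: "('l, 'p) aks \<Rightarrow> 'p set set" where
  "Pbul K = {P. phat K P = P}"

definition arrb :: "('l, 'p) aks \<Rightarrow> 'p set \<Rightarrow> 'p set \<Rightarrow> 'p set" where
  "arrb K P Q = phat K {push K t \<pi> | t \<pi>. t \<in> rpol K P \<and> \<pi> \<in> Q}"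

definition compb :: "('l, 'p) aks \<Rightarrow> 'p set \<Rightarrow> 'p set \<Rightarrow> 'p set" where
  "compb K P Q = {\<pi>. \<forall>t\<in>rpol K Q. \<forall>\<pi>'\<in>pcl K {\<pi>}. push K t \<pi>' \<in> P}"

definition Ecomb :: "('l, 'p) aks \<Rightarrow> 'l" where
  "Ecomb K = app K (Sc K) (app K (Kc K) (app K (app K (Sc K) (Kc K)) (Kc K)))"

definition Bcomb :: "('l, 'p) aks \<Rightarrow> 'l" where
  "Bcomb K = app K (app K (Sc K) (app K (Kc K) (Sc K))) (Kc K)"

definition kbul :: "('l, 'p) aks \<Rightarrow> 'p set" where
  "kbul K = lpol K {app K (Ecomb K) (Kc K)}"

definition sbul :: "('l, 'p) aks \<Rightarrow> 'p set" where
  "sbul K = lpol K {app K (Ecomb K) (app K (app K (Bcomb K) (Ecomb K)) (Sc K))}"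

definition Phib :: "('l, 'p) aks \<Rightarrow> 'p set set" where
  "Phib K = {P \<in> Pbul K. \<exists>t\<in>QP K. \<forall>\<pi>\<in>P. perp K t \<pi>}"

definition sqb :: "('l, 'p) aks \<Rightarrow> 'p set \<Rightarrow> 'p set \<Rightarrow> bool" where
  "sqb K Q R \<longleftrightarrow> (\<exists>t\<in>QP K. \<forall>\<pi>\<in>arrb K Q R. perp K t \<pi>)"

definition sqA :: "('l, 'p) aks \<Rightarrow> 'p set \<Rightarrow> 'p set \<Rightarrow> bool" where
  "sqA K Q R \<longleftrightarrow> (\<exists>F\<in>Phib K. compb K F Q \<supseteq> R)"

datatype cterm = CVar nat | CApp cterm cterm | CK | CS

fun cfree :: "nat \<Rightarrow> cterm \<Rightarrow> bool" where
  "cfree x (CVar y) = (x = y)"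
| "cfree x (CApp t u) = (cfree x t \<or> cfree x u)"
| "cfree x CK = False"
| "cfree x CS = False"

fun cabs :: "nat \<Rightarrow> cterm \<Rightarrow> cterm" where
  "cabs x (CVar y) = (if x = y then CApp (CApp CS CK) CK else CApp CK (CVar y))"
| "cabs x (CApp t u) = CApp (CApp CS (cabs x t)) (cabs x u)"
| "cabs x CK = CApp CK CK"
| "cabs x CS = CApp CK CS"

fun ceval :: "('a \<Rightarrow> 'a \<Rightarrow> 'a) \<Rightarrow> 'a \<Rightarrow> 'a \<Rightarrow> (nat \<Rightarrow> 'a) \<Rightarrow> cterm \<Rightarrow> 'a" where
  "ceval ap k s env (CVar y) = env y"
| "ceval ap k s env (CApp t u) = ap (ceval ap k s env t) (ceval ap k s env u)"
| "ceval ap k s env CK = k"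
| "ceval ap k s env CS = s"

text \<open>p = lam x lam y lam z. z x y  (x = 0, y = 1, z = 2), a closed term.\<close>
definition pair_term :: cterm where
  "pair_term = cabs 0 (cabs 1 (cabs 2 (CApp (CApp (CVar 2) (CVar 0)) (CVar 1))))"

definition pbul :: "('l, 'p) aks \<Rightarrow> 'p set" where
  "pbul K = ceval (compb K) (kbul K) (sbul K) (\<lambda>_. {}) pair_term"

definition meetb :: "('l, 'p) aks \<Rightarrow> 'p set \<Rightarrow> 'p set \<Rightarrow> 'p set" where
  "meetb K a b = compb K (compb K (pbul K) a) b"

definition heyting_preorder ::
  "'a set \<Rightarrow> ('a \<Rightarrow> 'a \<Rightarrow> bool) \<Rightarrow> ('a \<Rightarrow> 'a \<Rightarrow> 'a) \<Rightarrow> ('a \<Rightarrow> 'a \<Rightarrow> 'a) \<Rightarrow> bool" where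
  "heyting_preorder C le mt imp \<longleftrightarrow>
     (\<forall>a\<in>C. le a a) \<and>
     (\<forall>a\<in>C. \<forall>b\<in>C. \<forall>c\<in>C. le a b \<longrightarrow> le b c \<longrightarrow> le a c) \<and>
     (\<forall>a\<in>C. \<forall>b\<in>C. mt a b \<in> C \<and> imp a b \<in> C) \<and>
     (\<forall>a\<in>C. \<forall>b\<in>C. le (mt a b) a \<and> le (mt a b) b) \<and>
     (\<forall>a\<in>C. \<forall>b\<in>C. \<forall>c\<in>C. le c a \<longrightarrow> le c b \<longrightarrow> le c (mt a b)) \<and>
     (\<exists>top\<in>C. \<forall>a\<in>C. le a top) \<and>
     (\<forall>a\<in>C. \<forall>b\<in>C. \<forall>c\<in>C. le (mt a b) c \<longleftrightarrow> le a (imp b c))"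

end

theory Submission
  imports Defs
begin

locale kr = fixes K :: "('l,'p) aks" assumes ks: "is_aks K"
begin

lemma QP_app: "t \<in> QP K \<Longrightarrow> s \<in> QP K \<Longrightarrow> app K t s \<in> QP K" using ks unfolding is_aks_def by blast
lemma K_QP: "Kc K \<in> QP K" using ks unfolding is_aks_def by blast
lemma S_QP: "Sc K \<in> QP K" using ks unfolding is_aks_def by blast
lemma pushD: "perp K t (push K s \<pi>) \<Longrightarrow> perp K (app K t s) \<pi>" using ks unfolding is_aks_def by blast
lemma Kr: "perp K t \<pi> \<Longrightarrow> perp K (Kc K) (push K t (push K s \<pi>))" using ks unfolding is_aks_def by blast
lemma Sr: "perp K (app K (app K t u) (app K s u)) \<pi> \<Longrightarrow> perp K (Sc K) (push K t (push K s (push K u \<pi>)))"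
  using ks unfolding is_aks_def by blast

definition "Ic = app K (app K (Sc K) (Kc K)) (Kc K)"

lemma Ir: assumes h: "perp K t \<pi>" shows "perp K Ic (push K t \<pi>)"
proof -
  have "perp K (Kc K) (push K t (push K (app K (Kc K) t) \<pi>))" using Kr h .
  hence "perp K (app K (app K (Kc K) t) (app K (Kc K) t)) \<pi>" by (intro pushD)
  hence "perp K (Sc K) (push K (Kc K) (push K (Kc K) (push K t \<pi>)))" by (rule Sr)
  thus ?thesis unfolding Ic_def by (intro pushD)
qed

lemma Er: assumes h: "perp K (app K t s) \<pi>" shows "perp K (Ecomb K) (push K t (push K s \<pi>))"
proof -
  have "perp K Ic (push K (app K t s) \<pi>)" using Ir h .
  hence "perp K (Kc K) (push K Ic (push K s (push K (app K t s) \<pi>)))" by (rule Kr)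
  hence "perp K (app K (app K (app K (Kc K) Ic) s) (app K t s)) \<pi>" by (intro pushD)
  hence "perp K (Sc K) (push K (app K (Kc K) Ic) (push K t (push K s \<pi>)))" by (rule Sr)
  thus ?thesis unfolding Ecomb_def Ic_def by (intro pushD)
qed

lemma Br: assumes h: "perp K f (push K (app K g x) \<pi>)"
  shows "perp K (Bcomb K) (push K f (push K g (push K x \<pi>)))"
proof -
  have "perp K (Kc K) (push K f (push K x (push K (app K g x) \<pi>)))" using Kr h .
  hence "perp K (app K (app K (app K (Kc K) f) x) (app K g x)) \<pi>" by (intro pushD)
  hence "perp K (Sc K) (push K (app K (Kc K) f) (push K g (push K x \<pi>)))" by (rule Sr)
  hence "perp K (Kc K) (push K (Sc K) (push K f (push K (app K (Kc K) f) (push K g (push K x \<pi>)))))" by (rule Kr)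
  hence "perp K (app K (app K (app K (Kc K) (Sc K)) f) (app K (Kc K) f)) (push K g (push K x \<pi>))" by (intro pushD)
  hence "perp K (Sc K) (push K (app K (Kc K) (Sc K)) (push K (Kc K) (push K f (push K g (push K x \<pi>)))))" by (rule Sr)
  thus ?thesis unfolding Bcomb_def by (intro pushD)
qed

lemma pcl_single: "\<pi>' \<in> pcl K {\<pi>} \<longleftrightarrow> (\<forall>t. perp K t \<pi> \<longrightarrow> perp K t \<pi>')"
  unfolding pcl_def lpol_def rpol_def by auto

lemma pcl_self: "\<pi> \<in> pcl K {\<pi>}" by (simp add: pcl_single)
lemma pcl_perp: "\<pi>' \<in> pcl K {\<pi>} \<Longrightarrow> perp K t \<pi> \<Longrightarrow> perp K t \<pi>'" by (simp add: pcl_single)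
lemma pcl_trans: "\<pi>'' \<in> pcl K {\<pi>'} \<Longrightarrow> \<pi>' \<in> pcl K {\<pi>} \<Longrightarrow> \<pi>'' \<in> pcl K {\<pi>}" by (simp add: pcl_single)

lemma phat_sup: "X \<subseteq> phat K X" unfolding phat_def using pcl_self by blast
lemma phat_mono: "X \<subseteq> Y \<Longrightarrow> phat K X \<subseteq> phat K Y" unfolding phat_def by blast
lemma Pbul_iff: "P \<in> Pbul K \<longleftrightarrow> (\<forall>\<pi>\<in>P. pcl K {\<pi>} \<subseteq> P)"
  unfolding Pbul_def phat_def using pcl_self by blast
lemma Pbul_eq: "P \<in> Pbul K \<Longrightarrow> phat K P = P" unfolding Pbul_def by simp
lemma phat_Pbul: "phat K X \<in> Pbul K" unfolding Pbul_iff phat_def using pcl_trans by blast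
lemma compb_Pbul: "compb K P Q \<in> Pbul K" unfolding Pbul_iff compb_def using pcl_trans by blast
lemma lpol_Pbul: "lpol K L \<in> Pbul K" unfolding Pbul_iff lpol_def using pcl_perp by blast
lemma arrb_Pbul: "arrb K P Q \<in> Pbul K" unfolding arrb_def by (rule phat_Pbul)
lemma rpol_phat: "t \<in> rpol K X \<Longrightarrow> t \<in> rpol K (phat K X)"
  unfolding rpol_def phat_def using pcl_perp by blast

lemma appR: "t \<in> rpol K P \<Longrightarrow> s \<in> rpol K Q \<Longrightarrow> app K t s \<in> rpol K (compb K P Q)"
  unfolding rpol_def compb_def using pcl_self pushD by blast

lemma mono: "P' \<subseteq> P \<Longrightarrow> Q' \<subseteq> Q \<Longrightarrow> compb K P' Q' \<subseteq> compb K P Q"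
  unfolding compb_def rpol_def by blast

lemma kax: "a \<subseteq> compb K (compb K (kbul K) a) b"
proof
  fix \<pi> assume pa: "\<pi> \<in> a"
  show "\<pi> \<in> compb K (compb K (kbul K) a) b"
    unfolding compb_def
  proof (safe)
    fix s \<pi>' assume "s \<in> rpol K b" and p1: "\<pi>' \<in> pcl K {\<pi>}"
    fix t \<pi>'' assume ta: "t \<in> rpol K a" and p2: "\<pi>'' \<in> pcl K {push K s \<pi>'}"
    have "perp K t \<pi>" using ta pa unfolding rpol_def by blast
    hence "perp K t \<pi>'" using p1 pcl_perp by blast
    hence "perp K (Kc K) (push K t (push K s \<pi>'))" by (rule Kr)
    hence "perp K (app K (Kc K) t) (push K s \<pi>')" by (rule pushD)
    hence "perp K (app K (Kc K) t) \<pi>''" using p2 pcl_perp by blast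
    hence "perp K (Ecomb K) (push K (Kc K) (push K t \<pi>''))" by (rule Er)
    hence "perp K (app K (Ecomb K) (Kc K)) (push K t \<pi>'')" by (rule pushD)
    thus "push K t \<pi>'' \<in> kbul K" unfolding kbul_def lpol_def by simp
  qed
qed

lemma sax: "compb K (compb K a c) (compb K b c) \<subseteq> compb K (compb K (compb K (sbul K) a) b) c"
proof
  fix \<pi> assume pr: "\<pi> \<in> compb K (compb K a c) (compb K b c)"
  show "\<pi> \<in> compb K (compb K (compb K (sbul K) a) b) c"
    unfolding compb_def[of K _ c]
  proof (safe)
    fix w \<pi>1 assume wc: "w \<in> rpol K c" and p1: "\<pi>1 \<in> pcl K {\<pi>}"
    show "push K w \<pi>1 \<in> compb K (compb K (sbul K) a) b"
      unfolding compb_def[of K _ b]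
    proof (safe)
      fix y \<pi>2 assume yb: "y \<in> rpol K b" and p2: "\<pi>2 \<in> pcl K {push K w \<pi>1}"
      show "push K y \<pi>2 \<in> compb K (sbul K) a"
        unfolding compb_def[of K _ a]
      proof (safe)
        fix x \<pi>3 assume xa: "x \<in> rpol K a" and p3: "\<pi>3 \<in> pcl K {push K y \<pi>2}"
        have yw: "app K y w \<in> rpol K (compb K b c)" using appR yb wc .
        have xw: "app K x w \<in> rpol K (compb K a c)" using appR xa wc .
        have "push K (app K y w) \<pi> \<in> compb K a c" using pr yw pcl_self unfolding compb_def by blast
        hence "perp K (app K x w) (push K (app K y w) \<pi>)" using xw unfolding rpol_def by blast
        hence "perp K (app K (app K x w) (app K y w)) \<pi>" by (rule pushD)
        hence "perp K (app K (app K x w) (app K y w)) \<pi>1" using p1 pcl_perp by blast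
        hence "perp K (Sc K) (push K x (push K y (push K w \<pi>1)))" by (rule Sr)
        hence "perp K (app K (app K (Sc K) x) y) (push K w \<pi>1)" by (intro pushD)
        hence "perp K (app K (app K (Sc K) x) y) \<pi>2" using p2 pcl_perp by blast
        hence "perp K (Ecomb K) (push K (app K (Sc K) x) (push K y \<pi>2))" by (rule Er)
        hence "perp K (Bcomb K) (push K (Ecomb K) (push K (Sc K) (push K x (push K y \<pi>2))))" by (rule Br)
        hence "perp K (app K (app K (app K (Bcomb K) (Ecomb K)) (Sc K)) x) (push K y \<pi>2)" by (intro pushD)
        hence "perp K (app K (app K (app K (Bcomb K) (Ecomb K)) (Sc K)) x) \<pi>3" using p3 pcl_perp by blast
        hence "perp K (Ecomb K) (push K (app K (app K (Bcomb K) (Ecomb K)) (Sc K)) (push K x \<pi>3))" by (rule Er)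
        hence "perp K (app K (Ecomb K) (app K (app K (Bcomb K) (Ecomb K)) (Sc K))) (push K x \<pi>3)" by (rule pushD)
        thus "push K x \<pi>3 \<in> sbul K" unfolding sbul_def lpol_def by simp
      qed
    qed
  qed
qed


abbreviation ev where "ev env t \<equiv> ceval (compb K) (kbul K) (sbul K) env t"

lemma cabs_ax: "ev (env(x:=v)) t \<subseteq> compb K (ev env (cabs x t)) v"
proof (induction t)
  case (CVar y)
  show ?case
  proof (cases "x = y")
    case True
    have "v \<subseteq> compb K (compb K (kbul K) v) (compb K (kbul K) v)" by (rule kax)
    also have "\<dots> \<subseteq> compb K (ev env (cabs x (CVar y))) v" using True by (simp add: sax)
    finally show ?thesis using True by simp
  next
    case False thus ?thesis by (simp add: kax)
  qed
next
  case (CApp t u)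
  have "ev (env(x:=v)) (CApp t u) \<subseteq> compb K (compb K (ev env (cabs x t)) v) (compb K (ev env (cabs x u)) v)"
    unfolding ceval.simps by (rule mono[OF CApp.IH(1) CApp.IH(2)])
  also have "\<dots> \<subseteq> compb K (ev env (cabs x (CApp t u))) v" by (simp add: sax)
  finally show ?case .
qed (simp_all add: kax)

lemma pax: "compb K (compb K c a) b \<subseteq> compb K (compb K (compb K (pbul K) a) b) c"
proof -
  let ?e0 = "(\<lambda>_. {}) :: nat \<Rightarrow> 'p set"
  let ?B = "CApp (CApp (CVar 2) (CVar 0)) (CVar 1)"
  have 1: "ev (?e0(0:=a)) (cabs 1 (cabs 2 ?B)) \<subseteq> compb K (pbul K) a"
    unfolding pbul_def pair_term_def by (rule cabs_ax)
  have 2: "ev (?e0(0:=a, 1:=b)) (cabs 2 ?B) \<subseteq> compb K (ev (?e0(0:=a)) (cabs 1 (cabs 2 ?B))) b"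
    by (rule cabs_ax)
  have 3: "ev (?e0(0:=a, 1:=b, 2:=c)) ?B \<subseteq> compb K (ev (?e0(0:=a, 1:=b)) (cabs 2 ?B)) c"
    by (rule cabs_ax)
  have "compb K (compb K c a) b = ev (?e0(0:=a, 1:=b, 2:=c)) ?B" by simp
  also have "\<dots> \<subseteq> compb K (ev (?e0(0:=a, 1:=b)) (cabs 2 ?B)) c" by (rule 3)
  also have "\<dots> \<subseteq> compb K (compb K (ev (?e0(0:=a)) (cabs 1 (cabs 2 ?B))) b) c" using 2 by (simp add: mono)
  also have "\<dots> \<subseteq> compb K (compb K (compb K (pbul K) a) b) c" using 1 by (simp add: mono)
  finally show ?thesis .
qed

abbreviation "Phi \<equiv> Phib K"

lemma E_QP: "Ecomb K \<in> QP K" unfolding Ecomb_def by (intro QP_app K_QP S_QP)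
lemma B_QP: "Bcomb K \<in> QP K" unfolding Bcomb_def by (intro QP_app K_QP S_QP)

lemma Phi_k: "kbul K \<in> Phi"
proof -
  have "app K (Ecomb K) (Kc K) \<in> QP K" by (intro QP_app E_QP K_QP)
  thus ?thesis unfolding Phib_def using lpol_Pbul unfolding kbul_def lpol_def by blast
qed

lemma Phi_s: "sbul K \<in> Phi"
proof -
  have "app K (Ecomb K) (app K (app K (Bcomb K) (Ecomb K)) (Sc K)) \<in> QP K" by (intro QP_app E_QP B_QP S_QP)
  thus ?thesis unfolding Phib_def using lpol_Pbul unfolding sbul_def lpol_def by blast
qed

lemma Phi_c: "P \<in> Phi \<Longrightarrow> Q \<in> Phi \<Longrightarrow> compb K P Q \<in> Phi"
proof -
  assume "P \<in> Phi" "Q \<in> Phi"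
  then obtain t s where "t \<in> QP K" "s \<in> QP K" "t \<in> rpol K P" "s \<in> rpol K Q"
    unfolding Phib_def rpol_def by blast
  hence "app K t s \<in> QP K" "app K t s \<in> rpol K (compb K P Q)" using QP_app appR by auto
  thus ?thesis unfolding Phib_def rpol_def using compb_Pbul by blast
qed

lemma Phi_e: "{} \<in> Phi" unfolding Phib_def Pbul_def phat_def using K_QP by blast

lemma Phi_ev: "(\<And>y. env y \<in> Phi) \<Longrightarrow> ev env t \<in> Phi"
proof (induction t)
  case (CApp t u) thus ?case by (simp add: Phi_c)
qed (simp_all add: Phi_k Phi_s)

lemma Phi_p: "pbul K \<in> Phi" unfolding pbul_def by (rule Phi_ev) (rule Phi_e)

lemma Phi_Pbul: "F \<in> Phi \<Longrightarrow> F \<in> Pbul K" unfolding Phib_def by blast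

lemma adj: assumes "P \<in> Pbul K" "R \<in> Pbul K"
  shows "R \<subseteq> compb K P Q \<longleftrightarrow> arrb K Q R \<subseteq> P"
proof
  assume h: "R \<subseteq> compb K P Q"
  have "{push K t \<pi> | t \<pi>. t \<in> rpol K Q \<and> \<pi> \<in> R} \<subseteq> P"
  proof
    fix x assume "x \<in> {push K t \<pi> | t \<pi>. t \<in> rpol K Q \<and> \<pi> \<in> R}"
    then obtain t \<pi> where x: "x = push K t \<pi>" "t \<in> rpol K Q" "\<pi> \<in> R" by blast
    hence "\<pi> \<in> compb K P Q" using h by (rule_tac subsetD) auto
    thus "x \<in> P" using x pcl_self unfolding compb_def by blast
  qed
  hence "arrb K Q R \<subseteq> phat K P" unfolding arrb_def by (rule phat_mono)
  thus "arrb K Q R \<subseteq> P" using Pbul_eq[OF assms(1)] by simp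
next
  assume h: "arrb K Q R \<subseteq> P"
  show "R \<subseteq> compb K P Q"
  proof
    fix \<pi> assume pR: "\<pi> \<in> R"
    show "\<pi> \<in> compb K P Q" unfolding compb_def
    proof (intro CollectI ballI)
      fix t \<pi>' assume tQ: "t \<in> rpol K Q" and p1: "\<pi>' \<in> pcl K {\<pi>}"
      have "pcl K {\<pi>} \<subseteq> R" using assms(2) pR unfolding Pbul_iff by blast
      hence "\<pi>' \<in> R" using p1 by blast
      hence "push K t \<pi>' \<in> {push K t \<pi> | t \<pi>. t \<in> rpol K Q \<and> \<pi> \<in> R}" using tQ by blast
      hence "push K t \<pi>' \<in> arrb K Q R" unfolding arrb_def by (rule subsetD[OF phat_sup])
      thus "push K t \<pi>' \<in> P" using h by blast
    qed
  qed
qed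

lemma sqA_iff: "sqA K Q R \<longleftrightarrow> (\<exists>F\<in>Phi. R \<subseteq> compb K F Q)" unfolding sqA_def by blast

lemma equiv: assumes "Q \<in> Pbul K" "R \<in> Pbul K" shows "sqb K Q R \<longleftrightarrow> sqA K Q R"
proof
  assume "sqb K Q R"
  then obtain t where "t \<in> QP K" "\<forall>\<pi>\<in>arrb K Q R. perp K t \<pi>" unfolding sqb_def by blast
  hence "arrb K Q R \<in> Phi" unfolding Phib_def using arrb_Pbul by blast
  moreover have "R \<subseteq> compb K (arrb K Q R) Q" using adj[OF arrb_Pbul assms(2)] by simp
  ultimately show "sqA K Q R" unfolding sqA_def by blast
next
  assume "sqA K Q R"
  then obtain F where F: "F \<in> Phi" "R \<subseteq> compb K F Q" unfolding sqA_def by blast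
  hence sub: "arrb K Q R \<subseteq> F" using adj[OF Phi_Pbul[OF F(1)] assms(2)] by simp
  obtain t where "t \<in> QP K" "\<forall>\<pi>\<in>F. perp K t \<pi>" using F(1) unfolding Phib_def by blast
  thus "sqb K Q R" unfolding sqb_def using sub by blast
qed

abbreviation "ik \<equiv> compb K (compb K (sbul K) (kbul K)) (kbul K)"
lemma Phi_i: "ik \<in> Phi" by (intro Phi_c Phi_s Phi_k)
lemma iax: "a \<subseteq> compb K ik a"
  using kax[of a "compb K (kbul K) a"] sax[of "kbul K" a "kbul K"] by (rule order_trans)


abbreviation "kk \<equiv> kbul K"
abbreviation "ss \<equiv> sbul K"
abbreviation "pp \<equiv> pbul K"
abbreviation cc (infixl "\<cdot>" 90) where "a \<cdot> b \<equiv> compb K a b"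

lemma sax': "x \<subseteq> a \<cdot> c \<cdot> (b \<cdot> c) \<Longrightarrow> x \<subseteq> ss \<cdot> a \<cdot> b \<cdot> c" using sax by blast
lemma kax': "x \<subseteq> a \<Longrightarrow> x \<subseteq> kk \<cdot> a \<cdot> b" using kax by blast
lemma iax': "x \<subseteq> a \<Longrightarrow> x \<subseteq> ik \<cdot> a" using iax by blast
lemma pax': "x \<subseteq> c \<cdot> a \<cdot> b \<Longrightarrow> x \<subseteq> pp \<cdot> a \<cdot> b \<cdot> c" using pax by blast
lemma mono': "x \<subseteq> a' \<cdot> b' \<Longrightarrow> a' \<subseteq> a \<Longrightarrow> b' \<subseteq> b \<Longrightarrow> x \<subseteq> a \<cdot> b" using mono by blast
lemma monoL: "x \<subseteq> a' \<cdot> b \<Longrightarrow> a' \<subseteq> a \<Longrightarrow> x \<subseteq> a \<cdot> b" using mono by blast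
lemma monoR: "x \<subseteq> a \<cdot> b' \<Longrightarrow> b' \<subseteq> b \<Longrightarrow> x \<subseteq> a \<cdot> b" using mono by blast

lemma h_refl: "sqA K a a" unfolding sqA_iff using Phi_i iax by blast

lemma h_trans: assumes "sqA K a b" "sqA K b c" shows "sqA K a c"
proof -
  obtain F G where F: "F \<in> Phi" "b \<subseteq> F \<cdot> a" and G: "G \<in> Phi" "c \<subseteq> G \<cdot> b"
    using assms unfolding sqA_iff by blast
  have "c \<subseteq> G \<cdot> (F \<cdot> a)" using G(2) by (rule monoR) (rule F(2))
  hence "c \<subseteq> kk \<cdot> G \<cdot> a \<cdot> (F \<cdot> a)" by (rule monoL) (rule kax)
  hence "c \<subseteq> ss \<cdot> (kk \<cdot> G) \<cdot> F \<cdot> a" by (rule sax')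
  moreover have "ss \<cdot> (kk \<cdot> G) \<cdot> F \<in> Phi" by (intro Phi_c Phi_s Phi_k F G)
  ultimately show ?thesis unfolding sqA_iff by blast
qed

lemma h_meet1: "sqA K (pp \<cdot> a \<cdot> b) a"
proof -
  let ?x = "pp \<cdot> a \<cdot> b"
  have "a \<subseteq> ?x \<cdot> kk" by (rule pax') (rule kax)
  hence "a \<subseteq> ik \<cdot> ?x \<cdot> (kk \<cdot> kk \<cdot> ?x)" by (rule mono') (rule iax, rule kax)
  hence "a \<subseteq> ss \<cdot> ik \<cdot> (kk \<cdot> kk) \<cdot> ?x" by (rule sax')
  moreover have "ss \<cdot> ik \<cdot> (kk \<cdot> kk) \<in> Phi" by (intro Phi_c Phi_s Phi_k Phi_i)
  ultimately show ?thesis unfolding sqA_iff by blast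
qed

lemma h_meet2: "sqA K (pp \<cdot> a \<cdot> b) b"
proof -
  let ?x = "pp \<cdot> a \<cdot> b"
  have "b \<subseteq> ik \<cdot> b" by (rule iax)
  hence "b \<subseteq> kk \<cdot> ik \<cdot> a \<cdot> b" by (rule monoL) (rule kax)
  hence "b \<subseteq> ?x \<cdot> (kk \<cdot> ik)" by (rule pax')
  hence "b \<subseteq> ik \<cdot> ?x \<cdot> (kk \<cdot> (kk \<cdot> ik) \<cdot> ?x)" by (rule mono') (rule iax, rule kax)
  hence "b \<subseteq> ss \<cdot> ik \<cdot> (kk \<cdot> (kk \<cdot> ik)) \<cdot> ?x" by (rule sax')
  moreover have "ss \<cdot> ik \<cdot> (kk \<cdot> (kk \<cdot> ik)) \<in> Phi" by (intro Phi_c Phi_s Phi_k Phi_i)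
  ultimately show ?thesis unfolding sqA_iff by blast
qed

lemma h_glb: assumes "sqA K c a" "sqA K c b" shows "sqA K c (pp \<cdot> a \<cdot> b)"
proof -
  obtain F G where F: "F \<in> Phi" "a \<subseteq> F \<cdot> c" and G: "G \<in> Phi" "b \<subseteq> G \<cdot> c"
    using assms unfolding sqA_iff by blast
  have "pp \<cdot> a \<cdot> b \<subseteq> pp \<cdot> (F \<cdot> c) \<cdot> (G \<cdot> c)" by (intro mono F(2) G(2) order_refl)
  hence "pp \<cdot> a \<cdot> b \<subseteq> kk \<cdot> pp \<cdot> c \<cdot> (F \<cdot> c) \<cdot> (G \<cdot> c)" by (rule monoL) (rule mono[OF kax order_refl])
  hence "pp \<cdot> a \<cdot> b \<subseteq> ss \<cdot> (kk \<cdot> pp) \<cdot> F \<cdot> c \<cdot> (G \<cdot> c)" by (rule monoL) (rule sax)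
  hence "pp \<cdot> a \<cdot> b \<subseteq> ss \<cdot> (ss \<cdot> (kk \<cdot> pp) \<cdot> F) \<cdot> G \<cdot> c" by (rule sax')
  moreover have "ss \<cdot> (ss \<cdot> (kk \<cdot> pp) \<cdot> F) \<cdot> G \<in> Phi" by (intro Phi_c Phi_s Phi_k Phi_p F G)
  ultimately show ?thesis unfolding sqA_iff by blast
qed

lemma h_top: "sqA K a {}" unfolding sqA_iff using Phi_i by (intro bexI[of _ ik]) auto

lemma h_adj1: assumes "a \<in> Pbul K" "b \<in> Pbul K" "c \<in> Pbul K" "sqA K a (arrb K b c)"
  shows "sqA K (pp \<cdot> a \<cdot> b) c"
proof -
  obtain F where F: "F \<in> Phi" "arrb K b c \<subseteq> F \<cdot> a" using assms(4) unfolding sqA_iff by blast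
  have "c \<subseteq> F \<cdot> a \<cdot> b" using adj[OF compb_Pbul assms(3)] F(2) by simp
  hence "c \<subseteq> pp \<cdot> a \<cdot> b \<cdot> F" by (rule pax')
  hence "c \<subseteq> ik \<cdot> (pp \<cdot> a \<cdot> b) \<cdot> (kk \<cdot> F \<cdot> (pp \<cdot> a \<cdot> b))" by (rule mono') (rule iax, rule kax)
  hence "c \<subseteq> ss \<cdot> ik \<cdot> (kk \<cdot> F) \<cdot> (pp \<cdot> a \<cdot> b)" by (rule sax')
  moreover have "ss \<cdot> ik \<cdot> (kk \<cdot> F) \<in> Phi" by (intro Phi_c Phi_s Phi_k Phi_i F)
  ultimately show ?thesis unfolding sqA_iff by blast
qed

lemma h_adj2: assumes "a \<in> Pbul K" "b \<in> Pbul K" "c \<in> Pbul K" "sqA K (pp \<cdot> a \<cdot> b) c"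
  shows "sqA K a (arrb K b c)"
proof -
  obtain F where F: "F \<in> Phi" "c \<subseteq> F \<cdot> (pp \<cdot> a \<cdot> b)" using assms(4) unfolding sqA_iff by blast
  let ?G = "ss \<cdot> (kk \<cdot> (ss \<cdot> (kk \<cdot> F))) \<cdot> pp"
  have "c \<subseteq> kk \<cdot> F \<cdot> b \<cdot> (pp \<cdot> a \<cdot> b)" using F(2) by (rule monoL) (rule kax)
  hence "c \<subseteq> ss \<cdot> (kk \<cdot> F) \<cdot> (pp \<cdot> a) \<cdot> b" by (rule sax')
  hence "c \<subseteq> kk \<cdot> (ss \<cdot> (kk \<cdot> F)) \<cdot> a \<cdot> (pp \<cdot> a) \<cdot> b" by (rule monoL) (rule mono[OF kax order_refl])
  hence "c \<subseteq> ?G \<cdot> a \<cdot> b" by (rule monoL) (rule sax)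
  hence "arrb K b c \<subseteq> ?G \<cdot> a" using adj[OF compb_Pbul assms(3)] by simp
  moreover have "?G \<in> Phi" by (intro Phi_c Phi_s Phi_k Phi_p F)
  ultimately show ?thesis unfolding sqA_iff by blast
qed

end

theorem mainTheorem10:
  fixes K :: "('l, 'p) aks"
  assumes "is_aks K"
  shows "(\<forall>Q\<in>Pbul K. \<forall>R\<in>Pbul K. sqb K Q R \<longleftrightarrow> sqA K Q R)
         \<and> heyting_preorder (Pbul K) (sqb K) (meetb K) (arrb K)"
proof -
  interpret kr K by (rule kr.intro) (rule assms)
  have eq: "\<And>Q R. Q \<in> Pbul K \<Longrightarrow> R \<in> Pbul K \<Longrightarrow> sqb K Q R \<longleftrightarrow> sqA K Q R" by (rule equiv)
  have mt: "\<And>a b. meetb K a b = pp \<cdot> a \<cdot> b" unfolding meetb_def ..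
  have emp: "{} \<in> Pbul K" using Phi_e Phi_Pbul by blast
  show ?thesis
    unfolding heyting_preorder_def
  proof (intro conjI ballI)
    show "\<And>Q R. Q \<in> Pbul K \<Longrightarrow> R \<in> Pbul K \<Longrightarrow> sqb K Q R \<longleftrightarrow> sqA K Q R" by (rule eq)
    show "\<And>a. a \<in> Pbul K \<Longrightarrow> sqb K a a" by (simp add: eq h_refl)
    show "\<And>a b c. a \<in> Pbul K \<Longrightarrow> b \<in> Pbul K \<Longrightarrow> c \<in> Pbul K \<Longrightarrow> sqb K a b \<longrightarrow> sqb K b c \<longrightarrow> sqb K a c"
      by (simp add: eq) (rule impI, rule impI, erule (1) h_trans)
    show "\<And>a b. meetb K a b \<in> Pbul K" unfolding mt by (rule compb_Pbul)
    show "\<And>a b. arrb K a b \<in> Pbul K" by (rule arrb_Pbul)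
    show "\<And>a b. a \<in> Pbul K \<Longrightarrow> b \<in> Pbul K \<Longrightarrow> sqb K (meetb K a b) a"
      unfolding mt by (simp add: eq compb_Pbul h_meet1)
    show "\<And>a b. a \<in> Pbul K \<Longrightarrow> b \<in> Pbul K \<Longrightarrow> sqb K (meetb K a b) b"
      unfolding mt by (simp add: eq compb_Pbul h_meet2)
    show "\<And>a b c. a \<in> Pbul K \<Longrightarrow> b \<in> Pbul K \<Longrightarrow> c \<in> Pbul K \<Longrightarrow> sqb K c a \<longrightarrow> sqb K c b \<longrightarrow> sqb K c (meetb K a b)"
      unfolding mt by (simp add: eq compb_Pbul h_glb)
    show "\<exists>top\<in>Pbul K. \<forall>a\<in>Pbul K. sqb K a top"
    proof (rule bexI[OF _ emp], intro ballI)
      fix a assume "a \<in> Pbul K" thus "sqb K a {}" by (simp add: eq emp h_top)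
    qed
    show "\<And>a b c. a \<in> Pbul K \<Longrightarrow> b \<in> Pbul K \<Longrightarrow> c \<in> Pbul K \<Longrightarrow> sqb K (meetb K a b) c \<longleftrightarrow> sqb K a (arrb K b c)"
      unfolding mt by (simp add: eq compb_Pbul arrb_Pbul) (metis h_adj1 h_adj2)
  qed
qed

end
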